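(* Consider any realization of a run of Algorithm 4 (described in the context) under the standing assumption. For every $k\in\mathcal{K}$, if $k\in\mathcal{U}$ then $\delta_k>3(1-\eta)\epsilon_H/(2L_H)$. Consequently, for every realization, \[ \delta_k\ \ge\ \bar\delta_{\min}:=\min\Big\{\delta_0,\ \tfrac{3\gamma_1(1-\eta)}{2L_H}\epsilon_H\Big\}\in(0,\infty)\quad\text{for all }k\in\mathcal{K}. \]
   Context: Let $f:\mathbb{R}^n\to\mathbb{R}$ with gradient $g=\nabla f$ and Hessian $H=\nabla^2f$; $\|\cdot\|$ is the Euclidean norm, $\lambda_{\min}$ the smallest eigenvalue, $\mathbb{S}^n$ the real symmetric $n\times n$ matrices. Write $f_k=f(x_k)$, $g_k=g(x_k)$, $H_k=H(x_k)$, $m_k(x)=f_k+g_k^T(x-x_k)+\tfrac12(x-x_k)^TH_k(x-x_k)$. Exact arithmetic is assumed. Algorithm 2 (truncated CG; inputs nonzero $g$, $H\in\mathbb{S}^n$, $\epsilon>0$, $\delta>0$, $\zeta\in(0,1)$, flag capCG, and $M\ge\|H\|$): $k_{\max}=\min\{n,\tfrac12\sqrt{\kappa}\ln(4\kappa^{3/2}/\zeta)\}$ with $\kappa=(M+2\epsilon)/\epsilon$ if capCG is true, else $k_{\max}=n$. Set $y_0=0,r_0=g,p_0=-g,j=0$. While $j<k_{\max}$: if $p_j^T(H+2\epsilon I)p_j\le\epsilon\|p_j\|^2$, return $s=y_j+\sigma p_j$ with $\sigma\ge0$, $\|s\|=\delta$, flag BND-NEG; set $\alpha_j=\|r_j\|^2/(p_j^T(H+2\epsilon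 I)p_j)$, $y_{j+1}=y_j+\alpha_jp_j$; if $\|y_{j+1}\|\ge\delta$, return $s=y_j+\sigma p_j$ with $\sigma\ge0$, $\|s\|=\delta$, flag BND-NORM; set $r_{j+1}=r_j+\alpha_j(H+2\epsilon I)p_j$; if $\|r_{j+1}\|\le\tfrac\zeta2\min\{\|g\|,\epsilon\|y_{j+1}\|\}$, return $s=y_{j+1}$, flag INT-RES; set $\beta_{j+1}=\|r_{j+1}\|^2/\|r_j\|^2$, $p_{j+1}=-r_{j+1}+\beta_{j+1}p_j$, $j\leftarrow j+1$. On loop exit return $s=y_j$, flag INT-MAX. Algorithm 3 (minimum eigenvalue oracle, MEO; inputs $g$, $H\in\mathbb{S}^n$, $\epsilon>0$, $\delta>0$, $\xi\in(0,1)$, $M\ge\|H\|$): a possibly randomized procedure that either returns $s=\pm\delta v$ with $\|v\|=1$, $v^THv\le-\epsilon/2$, satisfying $g^Ts\le0$, $s^THs\le-\tfrac12\epsilon\|s\|^2$, $\|s\|=\delta$, or returns an indication that $H\succeq-\epsilon I$. Algorithm 4 (inexact trust-region Newton-CG). Inputs: $\epsilon_g,\epsilon_H>0$; $\gamma_1\in(0,1)$, $\gamma_2\ge1$, $\psi\in(1/\gamma_2,1]$; $x_0$; $\delta_0>0$; $\delta_{\max}\ge\delta_0$; $\eta\in(0,1)$; $\zeta\in(0,1)$; $\xi\in[0,1)$; capCG; $M\ge L_g$. For $k=0,1,\dots$: evaluate $g_k,H_k$. If $g_k\ne0$, call Algorithm 2 with $(g_k,H_k,\epsilon_H,\delta_k,\zeta,\text{capCG},M)$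 obtaining $s_k^{CG}$ and flag outCG; else set $s_k^{CG}=0$, outCG$=$INT-RES. If outCG$\in\{$BND-NEG, BND-NORM$\}$ or ($\|g_k\|>\epsilon_g$ and outCG$=$INT-RES), set $s_k=s_k^{CG}$. Otherwise call Algorithm 3 with $(g_k,H_k,\epsilon_H,\delta_k,\xi,M)$; if it indicates $H_k\succeq-\epsilon_HI$, return $x_k$ (terminate), else take its output as $s_k$. Set $\rho_k=\frac{f_k-f(x_k+s_k)}{m_k(x_k)-m_k(x_k+s_k)}$. If $\rho_k\ge\eta$: $x_{k+1}=x_k+s_k$ and $\delta_{k+1}=\min\{\gamma_2\delta_k,\delta_{\max}\}$ if $\|s_k\|\ge\psi\delta_k$, else $\delta_{k+1}=\delta_k$. If $\rho_k<\eta$: $x_{k+1}=x_k$, $\delta_{k+1}=\gamma_1\|s_k\|$. $\mathcal{K}$ is the set of indices $k$ such that iteration $k$ is completed without termination (for the given realization); $\mathcal{U}=\{k\in\mathcal{K}:\rho_k<\eta\}$. Standing assumption: $\{f_k\}$ is bounded below by some $f_{\rm low}\in\mathbb{R}$, and all segments $[x_k,x_k+s_k]$ lie in an open set on which $f$ is twice continuously differentiable with gradient Lipschitz with constant $L_g>0$ and Hessian Lipschitz with constant $L_H>0$. *)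

theory Defs
  imports "HOL-Analysis.Analysis"
begin

section \<open>Algorithm 2: truncated (capped) conjugate gradient\<close>

datatype cg_flag = BND_NEG | BND_NORM | INT_RES | INT_MAX

definition cg_kmax :: "bool \<Rightarrow> real \<Rightarrow> real \<Rightarrow> real \<Rightarrow> nat \<Rightarrow> real" where
  "cg_kmax capCG M \<epsilon> \<zeta> n =
     (if capCG then
        (let \<kappa> = (M + 2 * \<epsilon>) / \<epsilon>
         in min (real n) ((1/2) * sqrt \<kappa> * ln (4 * \<kappa> powr (3/2) / \<zeta>)))
      else real n)"

definition shiftH :: "real^'n^'n \<Rightarrow> real \<Rightarrow> real^'n^'n" where
  "shiftH H \<epsilon> = H + (2 * \<epsilon>) *\<^sub>R mat 1"

text \<open>The sequences y, r, p are the CG iterates; J is the index at which the loop is left.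
  Exact arithmetic; the run is completely described by the recurrences.\<close>
definition truncated_cg ::
  "real^'n \<Rightarrow> real^'n^'n \<Rightarrow> real \<Rightarrow> real \<Rightarrow> real \<Rightarrow> bool \<Rightarrow> real \<Rightarrow> real^'n \<Rightarrow> cg_flag \<Rightarrow> bool"
where
  "truncated_cg g H \<epsilon> \<delta> \<zeta> capCG M s flag \<longleftrightarrow>
    (let kmax = cg_kmax capCG M \<epsilon> \<zeta> CARD('n); Hb = shiftH H \<epsilon> in
     \<exists>(y::nat \<Rightarrow> real^'n) r p J.
       y 0 = 0 \<and> r 0 = g \<and> p 0 = - g \<and>
       (\<forall>j<J. real j < kmax \<and>
          p j \<bullet> (Hb *v p j) > \<epsilon> * (norm (p j))\<^sup>2 \<and>
          (let \<alpha> = (norm (r j))\<^sup>2 / (p j \<bullet> (Hb *v p j)) in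
             y (Suc j) = y j + \<alpha> *\<^sub>R p j \<and>
             norm (y (Suc j)) < \<delta> \<and>
             r (Suc j) = r j + \<alpha> *\<^sub>R (Hb *v p j) \<and>
             \<not> (norm (r (Suc j)) \<le> (\<zeta> / 2) * min (norm g) (\<epsilon> * norm (y (Suc j)))) \<and>
             p (Suc j) = - r (Suc j) + ((norm (r (Suc j)))\<^sup>2 / (norm (r j))\<^sup>2) *\<^sub>R p j)) \<and>
       ( (kmax \<le> real J \<and> flag = INT_MAX \<and> s = y J)
       \<or> (real J < kmax \<and> p J \<bullet> (Hb *v p J) \<le> \<epsilon> * (norm (p J))\<^sup>2 \<and>
           flag = BND_NEG \<and> (\<exists>\<sigma>\<ge>0. s = y J + \<sigma> *\<^sub>R p J \<and> norm s = \<delta>))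
       \<or> (real J < kmax \<and> p J \<bullet> (Hb *v p J) > \<epsilon> * (norm (p J))\<^sup>2 \<and>
           (let \<alpha> = (norm (r J))\<^sup>2 / (p J \<bullet> (Hb *v p J));
                yn = y J + \<alpha> *\<^sub>R p J;
                rn = r J + \<alpha> *\<^sub>R (Hb *v p J) in
              (norm yn \<ge> \<delta> \<and> flag = BND_NORM \<and>
                 (\<exists>\<sigma>\<ge>0. s = y J + \<sigma> *\<^sub>R p J \<and> norm s = \<delta>))
            \<or> (norm yn < \<delta> \<and> norm rn \<le> (\<zeta> / 2) * min (norm g) (\<epsilon> * norm yn) \<and>
                 flag = INT_RES \<and> s = yn)))))"

section \<open>Algorithm 3: minimum eigenvalue oracle (specification of an output)\<close>

text \<open>A (possibly randomized) MEO realization either returns a vector s (Some s) with the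
  stated properties, or (None) an indication that H is PSD up to -eps; the latter leads
  to termination of Algorithm 4.\<close>
definition meo_returns :: "real^'n \<Rightarrow> real^'n^'n \<Rightarrow> real \<Rightarrow> real \<Rightarrow> real^'n \<Rightarrow> bool" where
  "meo_returns g H \<epsilon> \<delta> s \<longleftrightarrow>
     (\<exists>v. norm v = 1 \<and> v \<bullet> (H *v v) \<le> - \<epsilon> / 2 \<and> (s = \<delta> *\<^sub>R v \<or> s = - (\<delta> *\<^sub>R v))) \<and>
     g \<bullet> s \<le> 0 \<and> s \<bullet> (H *v s) \<le> - (1/2) * \<epsilon> * (norm s)\<^sup>2 \<and> norm s = \<delta>"

section \<open>Algorithm 4: inexact trust-region Newton-CG\<close>

definition qmodel :: "(real^'n \<Rightarrow> real) \<Rightarrow> (real^'n \<Rightarrow> real^'n) \<Rightarrow> (real^'n \<Rightarrow> real^'n^'n)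
    \<Rightarrow> real^'n \<Rightarrow> real^'n \<Rightarrow> real" where
  "qmodel f g H xk x = f xk + g xk \<bullet> (x - xk) + (1/2) * ((x - xk) \<bullet> (H xk *v (x - xk)))"

definition tr_rho :: "(real^'n \<Rightarrow> real) \<Rightarrow> (real^'n \<Rightarrow> real^'n) \<Rightarrow> (real^'n \<Rightarrow> real^'n^'n)
    \<Rightarrow> real^'n \<Rightarrow> real^'n \<Rightarrow> real" where
  "tr_rho f g H xk sk =
     (f xk - f (xk + sk)) / (qmodel f g H xk xk - qmodel f g H xk (xk + sk))"

definition alg4_cg_call :: "(real^'n \<Rightarrow> real^'n) \<Rightarrow> (real^'n \<Rightarrow> real^'n^'n) \<Rightarrow> real \<Rightarrow> real
    \<Rightarrow> bool \<Rightarrow> real \<Rightarrow> real^'n \<Rightarrow> real \<Rightarrow> real^'n \<Rightarrow> cg_flag \<Rightarrow> bool" where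
  "alg4_cg_call g H \<epsilon>H \<zeta> capCG M xk dk sCG outCG \<longleftrightarrow>
     (if g xk \<noteq> 0 then truncated_cg (g xk) (H xk) \<epsilon>H dk \<zeta> capCG M sCG outCG
      else sCG = 0 \<and> outCG = INT_RES)"

definition alg4_use_cg :: "real \<Rightarrow> real^'n \<Rightarrow> cg_flag \<Rightarrow> bool" where
  "alg4_use_cg \<epsilon>g gk outCG \<longleftrightarrow>
     outCG \<in> {BND_NEG, BND_NORM} \<or> (norm gk > \<epsilon>g \<and> outCG = INT_RES)"

definition alg4_step :: "(real^'n \<Rightarrow> real) \<Rightarrow> (real^'n \<Rightarrow> real^'n) \<Rightarrow> (real^'n \<Rightarrow> real^'n^'n)
    \<Rightarrow> real \<Rightarrow> real \<Rightarrow> real \<Rightarrow> real \<Rightarrow> real \<Rightarrow> real \<Rightarrow> real \<Rightarrow> real \<Rightarrow> bool \<Rightarrow> real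
    \<Rightarrow> real^'n \<Rightarrow> real \<Rightarrow> real^'n \<Rightarrow> real^'n \<Rightarrow> real \<Rightarrow> bool" where
  "alg4_step f g H \<epsilon>g \<epsilon>H \<gamma>1 \<gamma>2 \<psi> \<delta>max \<eta> \<zeta> capCG M xk dk sk x' d' \<longleftrightarrow>
     (\<exists>sCG outCG. alg4_cg_call g H \<epsilon>H \<zeta> capCG M xk dk sCG outCG \<and>
        (if alg4_use_cg \<epsilon>g (g xk) outCG then sk = sCG
         else meo_returns (g xk) (H xk) \<epsilon>H dk sk)) \<and>
     (if tr_rho f g H xk sk \<ge> \<eta>
      then x' = xk + sk \<and> d' = (if norm sk \<ge> \<psi> * dk then min (\<gamma>2 * dk) \<delta>max else dk)
      else x' = xk \<and> d' = \<gamma>1 * norm sk)"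

text \<open>Iteration k of Algorithm 4 reaches the MEO call (and terminates there, when the
  MEO reports H_k >= -eps_H I).\<close>
definition alg4_reaches_meo :: "(real^'n \<Rightarrow> real^'n) \<Rightarrow> (real^'n \<Rightarrow> real^'n^'n)
    \<Rightarrow> real \<Rightarrow> real \<Rightarrow> real \<Rightarrow> bool \<Rightarrow> real \<Rightarrow> real^'n \<Rightarrow> real \<Rightarrow> bool" where
  "alg4_reaches_meo g H \<epsilon>g \<epsilon>H \<zeta> capCG M xk dk \<longleftrightarrow>
     (\<exists>sCG outCG. alg4_cg_call g H \<epsilon>H \<zeta> capCG M xk dk sCG outCG \<and>
        \<not> alg4_use_cg \<epsilon>g (g xk) outCG)"

text \<open>A realization of a run of Algorithm 4: iterates x, radii d, trial steps s, and the set
  K of iterations completed without termination.\<close>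
definition alg4_run :: "(real^'n \<Rightarrow> real) \<Rightarrow> (real^'n \<Rightarrow> real^'n) \<Rightarrow> (real^'n \<Rightarrow> real^'n^'n)
    \<Rightarrow> real \<Rightarrow> real \<Rightarrow> real \<Rightarrow> real \<Rightarrow> real \<Rightarrow> real^'n \<Rightarrow> real \<Rightarrow> real \<Rightarrow> real \<Rightarrow> real
    \<Rightarrow> bool \<Rightarrow> real
    \<Rightarrow> (nat \<Rightarrow> real^'n) \<Rightarrow> (nat \<Rightarrow> real) \<Rightarrow> (nat \<Rightarrow> real^'n) \<Rightarrow> nat set \<Rightarrow> bool" where
  "alg4_run f g H \<epsilon>g \<epsilon>H \<gamma>1 \<gamma>2 \<psi> x0 \<delta>0 \<delta>max \<eta> \<zeta> capCG M x d s K \<longleftrightarrow>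
     x 0 = x0 \<and> d 0 = \<delta>0 \<and>
     (\<forall>k\<in>K. \<forall>j<k. j \<in> K) \<and>
     (\<forall>k\<in>K. alg4_step f g H \<epsilon>g \<epsilon>H \<gamma>1 \<gamma>2 \<psi> \<delta>max \<eta> \<zeta> capCG M
                (x k) (d k) (s k) (x (Suc k)) (d (Suc k))) \<and>
     (\<forall>k. k \<notin> K \<longrightarrow> (\<forall>j<k. j \<in> K) \<longrightarrow> alg4_reaches_meo g H \<epsilon>g \<epsilon>H \<zeta> capCG M (x k) (d k))"

end

theory Submission
  imports Defs
begin

lemma line_has_derivative:
  assumes "(F has_derivative F') (at (a + t *\<^sub>R v))"
  shows "((\<lambda>t. F (a + t *\<^sub>R v)) has_derivative (\<lambda>h. h *\<^sub>R F' v)) (at t)"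
proof -
  have lin: "linear F'" using assms has_derivative_linear by blast
  have "((\<lambda>t. a + t *\<^sub>R v) has_derivative (\<lambda>h. h *\<^sub>R v)) (at t)"
    by (auto intro!: derivative_eq_intros)
  from has_derivative_compose[OF this assms]
  show ?thesis using lin by (simp add: linear_cmul)
qed

lemma deriv_to_real: "(f has_derivative (\<lambda>h. h *\<^sub>R c)) F \<Longrightarrow> (f has_real_derivative c) F"
proof -
  assume a: "(f has_derivative (\<lambda>h. h *\<^sub>R c)) F"
  have eq: "(\<lambda>h. h *\<^sub>R c) = (*) c" by (rule ext) simp
  show ?thesis using a unfolding has_field_derivative_def eq .
qed

lemma line_deriv_f:
  assumes "(f has_derivative (\<lambda>h. G \<bullet> h)) (at (a + t *\<^sub>R v))"
  shows "((\<lambda>t. f (a + t *\<^sub>R v)) has_real_derivative (G \<bullet> v)) (at t)"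
  using line_has_derivative[OF assms] by (intro deriv_to_real) simp

lemma line_deriv_g:
  fixes g :: "real^'n \<Rightarrow> real^'n"
  assumes "(g has_derivative (\<lambda>h. M *v h)) (at (a + t *\<^sub>R v))"
  shows "((\<lambda>t. g (a + t *\<^sub>R v) \<bullet> w) has_real_derivative ((M *v v) \<bullet> w)) (at t)"
proof -
  have "((\<lambda>t. g (a + t *\<^sub>R v)) has_derivative (\<lambda>h. h *\<^sub>R (M *v v))) (at t)"
    using line_has_derivative[OF assms] by simp
  then have "((\<lambda>t. g (a + t *\<^sub>R v) \<bullet> w) has_derivative (\<lambda>h. (h *\<^sub>R (M *v v)) \<bullet> w)) (at t)"
    by (auto intro!: derivative_eq_intros)
  then show ?thesis by (intro deriv_to_real) simp
qed


lemma mat_inner_bound: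
  fixes M :: "real^'n^'n"
  shows "\<bar>(M *v s) \<bullet> w\<bar> \<le> onorm (\<lambda>v. M *v v) * norm s * norm w"
proof -
  have "\<bar>(M *v s) \<bullet> w\<bar> \<le> norm (M *v s) * norm w" by (rule Cauchy_Schwarz_ineq2)
  also have "norm (M *v s) \<le> onorm (\<lambda>v. M *v v) * norm s"
    using onorm[OF matrix_vector_mul_bounded_linear[of M]] by simp
  then have "norm (M *v s) * norm w \<le> onorm (\<lambda>v. M *v v) * norm s * norm w"
    by (simp add: mult_right_mono)
  finally show ?thesis .
qed

lemma taylor3:
  fixes f :: "real^'n \<Rightarrow> real" and g :: "real^'n \<Rightarrow> real^'n" and H :: "real^'n \<Rightarrow> real^'n^'n"
  assumes seg: "\<And>t. t \<in> {0..1} \<Longrightarrow> x + t *\<^sub>R s \<in> S"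
   and grad: "\<forall>y\<in>S. (f has_derivative (\<lambda>h. g y \<bullet> h)) (at y)"
   and hess: "\<forall>y\<in>S. (g has_derivative (\<lambda>h. H y *v h)) (at y)"
   and Hl: "\<forall>y\<in>S. \<forall>z\<in>S. onorm (\<lambda>v. (H y - H z) *v v) \<le> LH * norm (y - z)"
  shows "f (x + s) \<le> f x + g x \<bullet> s + 1/2 * (s \<bullet> (H x *v s)) + LH/6 * norm s ^ 3"
proof -
  define p2 where "p2 t = (H (x + t *\<^sub>R s) *v s) \<bullet> s" for t
  define L where "L = LH * norm s ^ 3"
  have xS: "x \<in> S" using seg[of 0] by simp
  have bnd: "p2 t - p2 0 \<le> L * t" if t: "t \<in> {0..1}" for t
  proof -
    have yS: "x + t *\<^sub>R s \<in> S" using seg t by blast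
    have "p2 t - p2 0 = ((H (x + t *\<^sub>R s) - H x) *v s) \<bullet> s"
      by (simp add: p2_def matrix_vector_mult_diff_rdistrib inner_diff_left)
    also have "\<dots> \<le> onorm (\<lambda>v. (H (x + t *\<^sub>R s) - H x) *v v) * norm s * norm s"
      using mat_inner_bound by (metis abs_le_D1)
    also have "\<dots> \<le> LH * norm (t *\<^sub>R s) * norm s * norm s"
    proof -
      have "onorm (\<lambda>v. (H (x + t *\<^sub>R s) - H x) *v v) \<le> LH * norm ((x + t *\<^sub>R s) - x)"
        using Hl yS xS by blast
      then show ?thesis by (auto intro!: mult_right_mono)
    qed
    also have "\<dots> = L * t" using t by (simp add: L_def power3_eq_cube)
    finally show ?thesis .
  qed
  have d0: "((\<lambda>t. f (x + t *\<^sub>R s)) has_real_derivative (g (x + t *\<^sub>R s) \<bullet> s)) (at t)"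
    if "t \<in> {0..1}" for t
    using seg[OF that] grad by (intro line_deriv_f) auto
  have d1: "((\<lambda>t. g (x + t *\<^sub>R s) \<bullet> s) has_real_derivative p2 t) (at t)"
    if "t \<in> {0..1}" for t
    unfolding p2_def using seg[OF that] hess by (intro line_deriv_g) auto
  define q1 where "q1 t = g (x + t *\<^sub>R s) \<bullet> s - g x \<bullet> s - t * p2 0 - L * t^2/2" for t
  have dq1: "(q1 has_real_derivative (p2 t - p2 0 - L * t)) (at t)" if "t \<in> {0..1}" for t
    unfolding q1_def using d1[OF that]
    by (auto intro!: derivative_eq_intros simp: field_simps)
  have q1neg: "q1 t \<le> 0" if t: "t \<in> {0..1}" for t
  proof (cases "t = 0")
    case True then show ?thesis by (simp add: q1_def)
  next
    case False
    then have "0 < t" using t by auto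
    from MVT2[OF this, of q1 "\<lambda>t. p2 t - p2 0 - L * t"] dq1 t
    obtain z where z: "0 < z" "z < t" "q1 t - q1 0 = (t - 0) * (p2 z - p2 0 - L * z)"
      by auto
    have "p2 z - p2 0 - L * z \<le> 0" using bnd[of z] z t by auto
    moreover have "q1 0 = 0" by (simp add: q1_def)
    ultimately show ?thesis using z \<open>0 < t\<close> by (simp add: mult_nonneg_nonpos)
  qed
  define q where "q t = f (x + t *\<^sub>R s) - f x - t * (g x \<bullet> s) - t^2/2 * p2 0 - L * t^3/6" for t
  have dq: "(q has_real_derivative q1 t) (at t)" if "t \<in> {0..1}" for t
    unfolding q_def q1_def using d0[OF that]
    by (auto intro!: derivative_eq_intros simp: field_simps power2_eq_square power3_eq_cube)
  from MVT2[of 0 1 q q1] dq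
  obtain z where z: "0 < z" "z < 1" "q 1 - q 0 = (1 - 0) * q1 z" by auto
  have "q 1 \<le> 0" using z q1neg[of z] by (simp add: q_def)
  then show ?thesis
    by (simp add: q_def p2_def L_def inner_commute)
qed


lemma mixed_mvt:
  fixes f :: "real^'n \<Rightarrow> real" and g :: "real^'n \<Rightarrow> real^'n" and H :: "real^'n \<Rightarrow> real^'n^'n"
  assumes t: "0 < t"
   and box: "\<And>a b. a \<in> {0..t} \<Longrightarrow> b \<in> {0..t} \<Longrightarrow> x + a *\<^sub>R u + b *\<^sub>R v \<in> S"
   and grad: "\<forall>y\<in>S. (f has_derivative (\<lambda>h. g y \<bullet> h)) (at y)"
   and hess: "\<forall>y\<in>S. (g has_derivative (\<lambda>h. H y *v h)) (at y)"
  shows "\<exists>a b. a \<in> {0..t} \<and> b \<in> {0..t} \<and>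
     f (x + t *\<^sub>R u + t *\<^sub>R v) - f (x + t *\<^sub>R u) - f (x + t *\<^sub>R v) + f x
       = t^2 * ((H (x + a *\<^sub>R u + b *\<^sub>R v) *v u) \<bullet> v)"
proof -
  define \<phi> where "\<phi> b = f ((x + t *\<^sub>R u) + b *\<^sub>R v) - f (x + b *\<^sub>R v)" for b
  have d\<phi>: "(\<phi> has_real_derivative (g ((x + t *\<^sub>R u) + b *\<^sub>R v) \<bullet> v - g (x + b *\<^sub>R v) \<bullet> v)) (at b)"
    if b: "0 \<le> b" "b \<le> t" for b
  proof -
    have s1: "(x + t *\<^sub>R u) + b *\<^sub>R v \<in> S" using box[of t b] b t by auto
    have s2: "x + b *\<^sub>R v \<in> S" using box[of 0 b] b t by auto
    have "((\<lambda>b. f ((x + t *\<^sub>R u) + b *\<^sub>R v)) has_real_derivative (g ((x + t *\<^sub>R u) + b *\<^sub>R v) \<bullet> v)) (at b)"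
      using s1 grad by (intro line_deriv_f) auto
    moreover have "((\<lambda>b. f (x + b *\<^sub>R v)) has_real_derivative (g (x + b *\<^sub>R v) \<bullet> v)) (at b)"
      using s2 grad by (intro line_deriv_f) auto
    ultimately show ?thesis unfolding \<phi>_def by (rule DERIV_diff)
  qed
  from MVT2[OF t d\<phi>]
  obtain th where th: "0 < th" "th < t"
    "\<phi> t - \<phi> 0 = (t - 0) * (g ((x + t *\<^sub>R u) + th *\<^sub>R v) \<bullet> v - g (x + th *\<^sub>R v) \<bullet> v)"
    by blast
  define \<psi> where "\<psi> a = g ((x + th *\<^sub>R v) + a *\<^sub>R u) \<bullet> v" for a
  have d\<psi>: "(\<psi> has_real_derivative ((H ((x + th *\<^sub>R v) + a *\<^sub>R u) *v u) \<bullet> v)) (at a)"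
    if a: "0 \<le> a" "a \<le> t" for a
  proof -
    have eq: "(x + th *\<^sub>R v) + a *\<^sub>R u = x + a *\<^sub>R u + th *\<^sub>R v" by (simp add: algebra_simps)
    have "x + a *\<^sub>R u + th *\<^sub>R v \<in> S" using box[of a th] a th by auto
    then have "(x + th *\<^sub>R v) + a *\<^sub>R u \<in> S" unfolding eq .
    then show ?thesis unfolding \<psi>_def using hess by (intro line_deriv_g) auto
  qed
  from MVT2[OF t d\<psi>]
  obtain a where a: "0 < a" "a < t"
    "\<psi> t - \<psi> 0 = (t - 0) * ((H ((x + th *\<^sub>R v) + a *\<^sub>R u) *v u) \<bullet> v)"
    by blast
  have e1: "\<phi> t - \<phi> 0 = f (x + t *\<^sub>R u + t *\<^sub>R v) - f (x + t *\<^sub>R u) - f (x + t *\<^sub>R v) + f x"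
    by (simp add: \<phi>_def)
  have e2: "g ((x + t *\<^sub>R u) + th *\<^sub>R v) \<bullet> v - g (x + th *\<^sub>R v) \<bullet> v = \<psi> t - \<psi> 0"
    by (simp add: \<psi>_def algebra_simps)
  have e3: "(x + th *\<^sub>R v) + a *\<^sub>R u = x + a *\<^sub>R u + th *\<^sub>R v" by (simp add: algebra_simps)
  have "f (x + t *\<^sub>R u + t *\<^sub>R v) - f (x + t *\<^sub>R u) - f (x + t *\<^sub>R v) + f x
     = t * (t * ((H ((x + th *\<^sub>R v) + a *\<^sub>R u) *v u) \<bullet> v))"
    using e1 th(3) e2 a(3) by simp
  then have "f (x + t *\<^sub>R u + t *\<^sub>R v) - f (x + t *\<^sub>R u) - f (x + t *\<^sub>R v) + f x
     = t^2 * ((H (x + a *\<^sub>R u + th *\<^sub>R v) *v u) \<bullet> v)"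
    unfolding e3 by (simp add: power2_eq_square)
  moreover have "a \<in> {0..t}" "th \<in> {0..t}" using a th by auto
  ultimately show ?thesis by blast
qed


lemma small_zero:
  fixes c K T :: real
  assumes T: "T > 0" and h: "\<And>t. 0 < t \<Longrightarrow> t < T \<Longrightarrow> c \<le> K * t" and c: "c \<ge> 0"
  shows "c = 0"
proof (rule ccontr)
  assume "c \<noteq> 0" then have cp: "c > 0" using c by auto
  have "c \<le> K * (T/2)" using h[of "T/2"] T by auto
  moreover have "\<not> K > 0 \<Longrightarrow> K * (T/2) \<le> 0" using T by (simp add: mult_nonpos_nonneg)
  ultimately have Kp: "K > 0" using cp by linarith
  define t where "t = min (T/2) (c / (2*K))"
  have t0: "0 < t" "t < T" using T cp Kp by (auto simp: t_def)
  have "K * t \<le> K * (c / (2*K))" using Kp by (intro mult_left_mono) (auto simp: t_def)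
  also have "\<dots> = c/2" using Kp by simp
  finally show False using h[OF t0] cp by simp
qed

lemma hess_bound_at:
  fixes H :: "real^'n \<Rightarrow> real^'n^'n"
  assumes Hl: "\<forall>y\<in>S. \<forall>z\<in>S. onorm (\<lambda>v. (H y - H z) *v v) \<le> LH * norm (y - z)"
    and "y \<in> S" "z \<in> S"
  shows "\<bar>(H y *v u) \<bullet> v - (H z *v u) \<bullet> v\<bar> \<le> LH * norm (y - z) * norm u * norm v"
proof -
  have "\<bar>(H y *v u) \<bullet> v - (H z *v u) \<bullet> v\<bar> = \<bar>((H y - H z) *v u) \<bullet> v\<bar>"
    by (simp add: matrix_vector_mult_diff_rdistrib inner_diff_left)
  also have "\<dots> \<le> onorm (\<lambda>w. (H y - H z) *v w) * norm u * norm v" by (rule mat_inner_bound)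
  also have "\<dots> \<le> LH * norm (y - z) * norm u * norm v"
    using Hl assms(2,3) by (auto intro!: mult_right_mono)
  finally show ?thesis .
qed

lemma hess_sym:
  fixes f :: "real^'n \<Rightarrow> real" and g :: "real^'n \<Rightarrow> real^'n" and H :: "real^'n \<Rightarrow> real^'n^'n"
  assumes S: "open S" "x \<in> S"
   and grad: "\<forall>y\<in>S. (f has_derivative (\<lambda>h. g y \<bullet> h)) (at y)"
   and hess: "\<forall>y\<in>S. (g has_derivative (\<lambda>h. H y *v h)) (at y)"
   and Hl: "\<forall>y\<in>S. \<forall>z\<in>S. onorm (\<lambda>v. (H y - H z) *v v) \<le> LH * norm (y - z)"
   and LHp: "LH > 0"
  shows "(H x *v v) \<bullet> u = (H x *v u) \<bullet> v"
proof -
  obtain R where R: "R > 0" "ball x R \<subseteq> S" using S open_contains_ball by blast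
  define D where "D = norm u + norm v + 1"
  have D: "D > 0" unfolding D_def by (smt (verit) norm_ge_zero)
  have box: "x + a *\<^sub>R w1 + b *\<^sub>R w2 \<in> S"
    if t: "0 < t" "t < R / D" and ab: "a \<in> {0..t}" "b \<in> {0..t}"
      and w: "norm w1 + norm w2 + 1 = D" for t a b w1 w2
  proof -
    have "norm (a *\<^sub>R w1 + b *\<^sub>R w2) \<le> norm (a *\<^sub>R w1) + norm (b *\<^sub>R w2)"
      by (rule norm_triangle_ineq)
    also have "\<dots> = a * norm w1 + b * norm w2" using ab by simp
    also have "\<dots> \<le> t * norm w1 + t * norm w2"
      using ab by (intro add_mono mult_right_mono) auto
    also have "\<dots> = t * (D - 1)" by (simp add: w[symmetric] algebra_simps)
    also have "\<dots> \<le> t * D" using t by simp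
    also have "\<dots> < R" using t D by (simp add: pos_less_divide_eq)
    finally have "norm (a *\<^sub>R w1 + b *\<^sub>R w2) < R" .
    moreover have "dist x (x + a *\<^sub>R w1 + b *\<^sub>R w2) = norm (a *\<^sub>R w1 + b *\<^sub>R w2)"
      by (metis add.assoc add_diff_cancel_left' dist_commute dist_norm)
    ultimately have "dist x (x + a *\<^sub>R w1 + b *\<^sub>R w2) < R" by simp
    then show ?thesis using R by auto
  qed
  have near: "norm ((x + a *\<^sub>R w1 + b *\<^sub>R w2) - x) \<le> t * D"
    if t: "0 < t" and ab: "a \<in> {0..t}" "b \<in> {0..t}"
      and w: "norm w1 + norm w2 + 1 = D" for t a b w1 w2
  proof -
    have "norm (a *\<^sub>R w1 + b *\<^sub>R w2) \<le> norm (a *\<^sub>R w1) + norm (b *\<^sub>R w2)"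
      by (rule norm_triangle_ineq)
    also have "\<dots> = a * norm w1 + b * norm w2" using ab by simp
    also have "\<dots> \<le> t * norm w1 + t * norm w2"
      using ab by (intro add_mono mult_right_mono) auto
    also have "\<dots> = t * (D - 1)" by (simp add: w[symmetric] algebra_simps)
    also have "\<dots> \<le> t * D" using t by simp
    finally show ?thesis by (simp add: add.assoc)
  qed
  have key: "\<bar>(H x *v v) \<bullet> u - (H x *v u) \<bullet> v\<bar> \<le> (2 * LH * D * norm u * norm v) * t"
    if t: "0 < t" "t < R / D" for t
  proof -
    have Du: "norm u + norm v + 1 = D" "norm v + norm u + 1 = D" by (auto simp: D_def)
    obtain a1 b1 where ab1: "a1 \<in> {0..t}" "b1 \<in> {0..t}"
      "f (x + t *\<^sub>R u + t *\<^sub>R v) - f (x + t *\<^sub>R u) - f (x + t *\<^sub>R v) + f x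
       = t^2 * ((H (x + a1 *\<^sub>R u + b1 *\<^sub>R v) *v u) \<bullet> v)"
      using mixed_mvt[OF t(1) box[OF t _ _ Du(1)] grad hess] by blast
    obtain a2 b2 where ab2: "a2 \<in> {0..t}" "b2 \<in> {0..t}"
      "f (x + t *\<^sub>R v + t *\<^sub>R u) - f (x + t *\<^sub>R v) - f (x + t *\<^sub>R u) + f x
       = t^2 * ((H (x + a2 *\<^sub>R v + b2 *\<^sub>R u) *v v) \<bullet> u)"
      using mixed_mvt[OF t(1) box[OF t _ _ Du(2)] grad hess] by blast
    define z1 where "z1 = x + a1 *\<^sub>R u + b1 *\<^sub>R v"
    define z2 where "z2 = x + a2 *\<^sub>R v + b2 *\<^sub>R u"
    have eqa: "x + t *\<^sub>R v + t *\<^sub>R u = x + t *\<^sub>R u + t *\<^sub>R v" by (simp add: algebra_simps)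
    have "t^2 * ((H z1 *v u) \<bullet> v) = t^2 * ((H z2 *v v) \<bullet> u)"
      using ab1(3) ab2(3)[unfolded eqa] unfolding z1_def z2_def by linarith
    then have eqz: "(H z1 *v u) \<bullet> v = (H z2 *v v) \<bullet> u" using t by simp
    have z1S: "z1 \<in> S" unfolding z1_def using box[OF t ab1(1,2) Du(1)] .
    have z2S: "z2 \<in> S" unfolding z2_def using box[OF t ab2(1,2) Du(2)] .
    have n1: "norm (z1 - x) \<le> t * D" unfolding z1_def using near[OF t(1) ab1(1,2) Du(1)] .
    have n2: "norm (z2 - x) \<le> t * D" unfolding z2_def using near[OF t(1) ab2(1,2) Du(2)] .
    have LH0: "LH \<ge> 0" using LHp by simp
    define E where "E = LH * (t * D) * norm u * norm v"
    have b1: "\<bar>(H z1 *v u) \<bullet> v - (H x *v u) \<bullet> v\<bar> \<le> E"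
    proof -
      have "LH * norm (z1 - x) * norm u * norm v \<le> E"
        unfolding E_def using n1 LH0 by (intro mult_right_mono mult_left_mono) auto
      then show ?thesis using hess_bound_at[OF Hl z1S S(2), of u v] by linarith
    qed
    have b2: "\<bar>(H z2 *v v) \<bullet> u - (H x *v v) \<bullet> u\<bar> \<le> E"
    proof -
      have "LH * norm (z2 - x) * norm v * norm u \<le> LH * (t * D) * norm v * norm u"
        using n2 LH0 by (intro mult_right_mono mult_left_mono) auto
      also have "\<dots> = E" unfolding E_def by (simp add: mult_ac)
      finally show ?thesis using hess_bound_at[OF Hl z2S S(2), of v u] by linarith
    qed
    have "(2 * LH * D * norm u * norm v) * t = E + E" unfolding E_def by (simp add: algebra_simps)
    then show ?thesis using b1 b2 eqz by linarith
  qed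
  have "\<bar>(H x *v v) \<bullet> u - (H x *v u) \<bullet> v\<bar> = 0"
    by (rule small_zero[of "R/D", OF _ key]) (use R D in auto)
  then show ?thesis by simp
qed


locale cg =
  fixes A :: "real^'n^'n" and g :: "real^'n" and y r p :: "nat \<Rightarrow> real^'n" and J :: nat
  assumes sym: "\<And>u v. u \<bullet> (A *v v) = v \<bullet> (A *v u)"
  and y0: "y 0 = 0" and r0: "r 0 = g" and p0: "p 0 = - g" and g0: "g \<noteq> 0"
  and curv: "\<And>j. j < J \<Longrightarrow> p j \<bullet> (A *v p j) > 0"
  and rnz: "\<And>j. j < J \<Longrightarrow> r (Suc j) \<noteq> 0"
  and yS: "\<And>j. j < J \<Longrightarrow> y (Suc j) = y j + ((norm (r j))\<^sup>2 / (p j \<bullet> (A *v p j))) *\<^sub>R p j"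
  and rS: "\<And>j. j < J \<Longrightarrow> r (Suc j) = r j + ((norm (r j))\<^sup>2 / (p j \<bullet> (A *v p j))) *\<^sub>R (A *v p j)"
  and pS: "\<And>j. j < J \<Longrightarrow> p (Suc j) = - r (Suc j) + ((norm (r (Suc j)))\<^sup>2 / (norm (r j))\<^sup>2) *\<^sub>R p j"
begin

definition al where "al j = (norm (r j))\<^sup>2 / (p j \<bullet> (A *v p j))"
definition be where "be j = (norm (r (Suc j)))\<^sup>2 / (norm (r j))\<^sup>2"

lemma yS': "j < J \<Longrightarrow> y (Suc j) = y j + al j *\<^sub>R p j" using yS by (simp add: al_def)
lemma rS': "j < J \<Longrightarrow> r (Suc j) = r j + al j *\<^sub>R (A *v p j)" using rS by (simp add: al_def)
lemma pS': "j < J \<Longrightarrow> p (Suc j) = - r (Suc j) + be j *\<^sub>R p j" using pS by (simp add: be_def)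

lemma r_nz: "j \<le> J \<Longrightarrow> r j \<noteq> 0"
  by (cases j) (auto simp: r0 g0 rnz)

lemma al_pos: "j < J \<Longrightarrow> al j > 0"
  using r_nz[of j] curv[of j] by (simp add: al_def)

lemma al_mult: "j < J \<Longrightarrow> al j * (p j \<bullet> (A *v p j)) = (norm (r j))\<^sup>2"
  using curv[of j] by (simp add: al_def)

lemma be_nn: "be j \<ge> 0" by (simp add: be_def)

lemma symA: "(A *v u) \<bullet> v = (A *v v) \<bullet> u"
  using sym[of v u] by (simp add: inner_commute)

lemma r_res: "j \<le> J \<Longrightarrow> r j = g + A *v y j"
proof (induction j)
  case 0 then show ?case by (simp add: r0 y0)
next
  case (Suc j)
  then have j: "j < J" by simp
  have "r (Suc j) = g + A *v y j + al j *\<^sub>R (A *v p j)" using rS'[OF j] Suc by simp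
  also have "\<dots> = g + A *v y (Suc j)"
    by (simp add: yS'[OF j] matrix_vector_right_distrib matrix_vector_mult_scaleR)
  finally show ?case .
qed

lemma Ap_p: "(\<forall>i<j. p j \<bullet> (A *v p i) = 0) \<Longrightarrow> i < j \<Longrightarrow> (A *v p j) \<bullet> p i = 0"
  using sym[of "p i" "p j"] by (simp add: inner_commute)

lemma orth: "j \<le> J \<Longrightarrow> \<forall>i<j. r j \<bullet> r i = 0 \<and> r j \<bullet> p i = 0 \<and> p j \<bullet> (A *v p i) = 0"
proof (induction j)
  case 0 then show ?case by simp
next
  case (Suc j)
  then have jJ: "j < J" by simp
  have IH: "\<forall>i<j. r j \<bullet> r i = 0 \<and> r j \<bullet> p i = 0 \<and> p j \<bullet> (A *v p i) = 0" using Suc by simp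
  have pAp: "\<And>i. i < j \<Longrightarrow> (A *v p j) \<bullet> p i = 0" using IH Ap_p by blast
  have rp: "r j \<bullet> p j = - (norm (r j))\<^sup>2"
  proof (cases j)
    case 0 then show ?thesis by (simp add: r0 p0 power2_norm_eq_inner)
  next
    case (Suc j')
    then have "p j = - r j + be j' *\<^sub>R p j'" using pS'[of j'] jJ by simp
    moreover have "r j \<bullet> p j' = 0" using IH Suc by simp
    ultimately show ?thesis by (simp add: inner_add_right inner_diff_right power2_norm_eq_inner)
  qed
  have Apr: "(A *v p j) \<bullet> r i = 0" if i: "i < j" for i
  proof (cases i)
    case 0 then show ?thesis using pAp[of 0] i by (simp add: r0 p0)
  next
    case (Suc i')
    then have "r i = - p i + be i' *\<^sub>R p i'" using pS'[of i'] i jJ by simp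
    then show ?thesis using pAp[of i] pAp[of i'] i Suc by (simp add: inner_add_right inner_diff_right)
  qed
  have Aprj: "(A *v p j) \<bullet> r j = - (p j \<bullet> (A *v p j))"
  proof (cases j)
    case 0 then show ?thesis by (simp add: r0 p0 inner_commute)
  next
    case (Suc j')
    then have "r j = - p j + be j' *\<^sub>R p j'" using pS'[of j'] jJ by simp
    then show ?thesis using pAp[of j'] Suc by (simp add: inner_add_right inner_diff_right inner_commute)
  qed
  have am: "al j * (p j \<bullet> (A *v p j)) = (norm (r j))\<^sup>2" using al_mult[OF jJ] .
  have rr: "r (Suc j) \<bullet> r i = 0" if i: "i < Suc j" for i
  proof (cases "i < j")
    case True
    then show ?thesis using IH Apr[OF True] by (simp add: rS'[OF jJ] inner_add_left)
  next
    case False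
    then have "i = j" using i by simp
    then show ?thesis using Aprj am
      by (simp add: rS'[OF jJ] inner_add_left power2_norm_eq_inner)
  qed
  have rpi: "r (Suc j) \<bullet> p i = 0" if i: "i < Suc j" for i
  proof (cases "i < j")
    case True
    then show ?thesis using IH pAp[OF True] by (simp add: rS'[OF jJ] inner_add_left)
  next
    case False
    then have "i = j" using i by simp
    have "p j \<bullet> r (Suc j) = p j \<bullet> r j + al j * (p j \<bullet> (A *v p j))"
      by (simp add: rS'[OF jJ] inner_add_right)
    then show ?thesis using rp am \<open>i = j\<close> by (simp add: inner_commute)
  qed
  have rAp: "r (Suc j) \<bullet> (A *v p i) = (r (Suc j) \<bullet> r (Suc i) - r (Suc j) \<bullet> r i) / al i"
    if i: "i \<le> j" for i
  proof -
    have iJ: "i < J" using i jJ by simp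
    have "r (Suc i) - r i = al i *\<^sub>R (A *v p i)" using rS'[OF iJ] by simp
    then have "A *v p i = (1 / al i) *\<^sub>R (r (Suc i) - r i)" using al_pos[OF iJ] by simp
    then show ?thesis by (simp add: inner_diff_right)
  qed
  have pA: "p (Suc j) \<bullet> (A *v p i) = 0" if i: "i < Suc j" for i
  proof (cases "i < j")
    case True
    have "r (Suc j) \<bullet> (A *v p i) = 0" using rAp[of i] True rr[of i] rr[of "Suc i"] by simp
    then show ?thesis using IH True by (simp add: pS'[OF jJ] inner_add_left inner_diff_left)
  next
    case False
    then have ij: "i = j" using i by simp
    have "r (Suc j) \<bullet> (A *v p j) = (norm (r (Suc j)))\<^sup>2 / al j"
      using rAp[of j] rr[of j] by (simp add: power2_norm_eq_inner)
    moreover have "be j * (p j \<bullet> (A *v p j)) = (norm (r (Suc j)))\<^sup>2 / al j"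
      using curv[OF jJ] r_nz[of j] jJ by (simp add: be_def al_def)
    ultimately show ?thesis using ij by (simp add: pS'[OF jJ] inner_add_left inner_diff_left)
  qed
  show ?case using rr rpi pA by blast
qed

lemma rp: "j \<le> J \<Longrightarrow> r j \<bullet> p j = - (norm (r j))\<^sup>2"
proof (cases j)
  case 0 then show ?thesis by (simp add: r0 p0 power2_norm_eq_inner)
next
  case (Suc j')
  assume "j \<le> J"
  then have "p j = - r j + be j' *\<^sub>R p j'" using pS'[of j'] Suc by simp
  moreover have "r j \<bullet> p j' = 0" using orth[OF \<open>j \<le> J\<close>] Suc by simp
  ultimately show ?thesis by (simp add: inner_add_right inner_diff_right power2_norm_eq_inner)
qed

lemma y_sum: "j \<le> J \<Longrightarrow> y j = (\<Sum>i<j. al i *\<^sub>R p i)"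
  by (induction j) (auto simp: y0 yS')

lemma ry: "j \<le> J \<Longrightarrow> r j \<bullet> y j = 0"
  using orth[of j] by (simp add: y_sum inner_sum_right)

lemma yAp: "j \<le> J \<Longrightarrow> y j \<bullet> (A *v p j) = 0"
proof -
  assume j: "j \<le> J"
  have "\<And>i. i < j \<Longrightarrow> p i \<bullet> (A *v p j) = 0" using orth[OF j] sym by metis
  then show ?thesis by (simp add: y_sum[OF j] inner_sum_left)
qed

lemma yAy: "j \<le> J \<Longrightarrow> y j \<bullet> (A *v y j) \<ge> 0"
proof (induction j)
  case 0 then show ?case by (simp add: y0)
next
  case (Suc j)
  then have j: "j < J" by simp
  have z: "y j \<bullet> (A *v p j) = 0" using yAp[of j] j by simp
  have z2: "p j \<bullet> (A *v y j) = 0" using z sym by metis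
  have "y (Suc j) \<bullet> (A *v y (Suc j)) = y j \<bullet> (A *v y j) + (al j)\<^sup>2 * (p j \<bullet> (A *v p j))"
    using z z2 by (simp add: yS'[OF j] matrix_vector_right_distrib matrix_vector_mult_scaleR
        inner_add_left inner_add_right power2_eq_square)
  moreover have "(al j)\<^sup>2 * (p j \<bullet> (A *v p j)) \<ge> 0" using curv[OF j] by simp
  ultimately show ?case using Suc by simp
qed

lemma yp: "j \<le> J \<Longrightarrow> y j \<bullet> p j \<ge> 0"
proof (induction j)
  case 0 then show ?case by (simp add: y0)
next
  case (Suc j)
  then have j: "j < J" by simp
  have "y (Suc j) \<bullet> p (Suc j) = - (r (Suc j) \<bullet> y (Suc j)) + be j * (y (Suc j) \<bullet> p j)"
    by (simp add: pS'[OF j] inner_diff_right inner_commute[of "y (Suc j)"])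
  also have "\<dots> = be j * (y j \<bullet> p j + al j * (p j \<bullet> p j))"
    using ry[of "Suc j"] Suc by (simp add: yS'[OF j] inner_add_left)
  finally show ?case using Suc al_pos[OF j] be_nn[of j]
    by (simp add: mult_nonneg_nonneg)
qed

lemma ray:
  "g \<bullet> (y J + \<sigma> *\<^sub>R p J) + 1/2 * ((y J + \<sigma> *\<^sub>R p J) \<bullet> (A *v (y J + \<sigma> *\<^sub>R p J)))
   = - 1/2 * (y J \<bullet> (A *v y J)) - \<sigma> * (norm (r J))\<^sup>2 + \<sigma>^2/2 * (p J \<bullet> (A *v p J))"
proof -
  have gr: "g = r J - A *v y J" using r_res[of J] by simp
  have a1: "r J \<bullet> y J = 0" using ry by simp
  have a2: "y J \<bullet> (A *v p J) = 0" using yAp by simp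
  have a3: "p J \<bullet> (A *v y J) = 0" using a2 sym by metis
  have a4: "r J \<bullet> p J = - (norm (r J))\<^sup>2" using rp by simp
  show ?thesis
    unfolding gr
    by (simp add: matrix_vector_right_distrib matrix_vector_mult_scaleR inner_add_left
        inner_add_right inner_diff_left a1 a2 a3 a4 inner_commute[of "A *v y J" "y J"]
        inner_commute[of "A *v y J" "p J"] power2_eq_square algebra_simps)
qed

lemma norm_ray: "(norm (y J + \<sigma> *\<^sub>R p J))\<^sup>2 = (norm (y J))\<^sup>2 + 2 * \<sigma> * (y J \<bullet> p J) + \<sigma>^2 * (norm (p J))\<^sup>2"
  unfolding power2_norm_eq_inner
  by (simp add: inner_add_left inner_add_right inner_commute[of "p J" "y J"] power2_eq_square algebra_simps)

end

lemma shift_mv: "shiftH M e *v v = M *v v + (2*e) *\<^sub>R v"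
  by (simp add: shiftH_def matrix_vector_mult_add_rdistrib scaleR_matrix_vector_assoc[symmetric])

lemma step_decrease:
  fixes g :: "real^'n \<Rightarrow> real^'n" and H :: "real^'n \<Rightarrow> real^'n^'n"
  assumes eH: "\<epsilon>H > 0" and eg: "\<epsilon>g > 0" and zeta: "\<zeta> > 0" and dk: "dk > 0"
   and symH: "\<And>u v. u \<bullet> (H xk *v v) = v \<bullet> (H xk *v u)"
   and cgc: "alg4_cg_call g H \<epsilon>H \<zeta> capCG M xk dk sCG outCG"
   and sel: "if alg4_use_cg \<epsilon>g (g xk) outCG then sk = sCG else meo_returns (g xk) (H xk) \<epsilon>H dk sk"
  shows "0 < norm sk \<and> norm sk \<le> dk \<and> \<epsilon>H/4 * (norm sk)^2 \<le> -(g xk \<bullet> sk) - 1/2 * (sk \<bullet> (H xk *v sk))"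
proof (cases "alg4_use_cg \<epsilon>g (g xk) outCG")
  case False
  then have m: "meo_returns (g xk) (H xk) \<epsilon>H dk sk" using sel by simp
  then have n: "norm sk = dk" "g xk \<bullet> sk \<le> 0" "sk \<bullet> (H xk *v sk) \<le> - (1/2) * \<epsilon>H * (norm sk)^2"
    unfolding meo_returns_def by auto
  have "0 \<le> \<epsilon>H * (norm sk)^2" using eH by simp
  then show ?thesis using dk n by linarith
next
  case True
  then have s: "sk = sCG" using sel by simp
  define G where "G = g xk"
  have gnz: "G \<noteq> 0"
  proof
    assume "G = 0"
    then have "outCG = INT_RES" using cgc by (simp add: alg4_cg_call_def G_def)
    then show False using True \<open>G = 0\<close> eg by (simp add: alg4_use_cg_def G_def)
  qed
  then have tc: "truncated_cg G (H xk) \<epsilon>H dk \<zeta> capCG M sCG outCG" using cgc by (simp add: alg4_cg_call_def G_def)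
  define A where "A = shiftH (H xk) \<epsilon>H"
  define kmax where "kmax = cg_kmax capCG M \<epsilon>H \<zeta> CARD('n)"
  obtain y r p J where y0: "y 0 = 0" and r0: "r 0 = G" and p0: "p 0 = - G"
    and loop: "\<forall>j<J. real j < kmax \<and>
          p j \<bullet> (A *v p j) > \<epsilon>H * (norm (p j))\<^sup>2 \<and>
             y (Suc j) = y j + ((norm (r j))\<^sup>2 / (p j \<bullet> (A *v p j))) *\<^sub>R p j \<and>
             norm (y (Suc j)) < dk \<and>
             r (Suc j) = r j + ((norm (r j))\<^sup>2 / (p j \<bullet> (A *v p j))) *\<^sub>R (A *v p j) \<and>
             \<not> (norm (r (Suc j)) \<le> (\<zeta> / 2) * min (norm G) (\<epsilon>H * norm (y (Suc j)))) \<and>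
             p (Suc j) = - r (Suc j) + ((norm (r (Suc j)))\<^sup>2 / (norm (r j))\<^sup>2) *\<^sub>R p j"
    and fin: "(kmax \<le> real J \<and> outCG = INT_MAX \<and> sCG = y J)
       \<or> (real J < kmax \<and> p J \<bullet> (A *v p J) \<le> \<epsilon>H * (norm (p J))\<^sup>2 \<and>
           outCG = BND_NEG \<and> (\<exists>\<sigma>\<ge>0. sCG = y J + \<sigma> *\<^sub>R p J \<and> norm sCG = dk))
       \<or> (real J < kmax \<and> p J \<bullet> (A *v p J) > \<epsilon>H * (norm (p J))\<^sup>2 \<and>
              ((norm (y J + ((norm (r J))\<^sup>2 / (p J \<bullet> (A *v p J))) *\<^sub>R p J) \<ge> dk \<and> outCG = BND_NORM \<and>
                 (\<exists>\<sigma>\<ge>0. sCG = y J + \<sigma> *\<^sub>R p J \<and> norm sCG = dk))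
            \<or> (norm (y J + ((norm (r J))\<^sup>2 / (p J \<bullet> (A *v p J))) *\<^sub>R p J) < dk \<and>
                 norm (r J + ((norm (r J))\<^sup>2 / (p J \<bullet> (A *v p J))) *\<^sub>R (A *v p J))
                   \<le> (\<zeta> / 2) * min (norm G) (\<epsilon>H * norm (y J + ((norm (r J))\<^sup>2 / (p J \<bullet> (A *v p J))) *\<^sub>R p J)) \<and>
                 outCG = INT_RES \<and> sCG = y J + ((norm (r J))\<^sup>2 / (p J \<bullet> (A *v p J))) *\<^sub>R p J)))"
    using tc unfolding truncated_cg_def Let_def A_def[symmetric] kmax_def[symmetric] by blast
  have symA: "\<And>u v. u \<bullet> (A *v v) = v \<bullet> (A *v u)"
    by (simp add: A_def shift_mv inner_add_right symH inner_commute)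
  interpret cg A G y r p J
  proof
    show "\<And>u v. u \<bullet> (A *v v) = v \<bullet> (A *v u)" by (rule symA)
    show "y 0 = 0" "r 0 = G" "p 0 = - G" "G \<noteq> 0" by (fact y0 r0 p0 gnz)+
    show "\<And>j. j < J \<Longrightarrow> p j \<bullet> (A *v p j) > 0"
    proof -
      fix j assume "j < J"
      then have "p j \<bullet> (A *v p j) > \<epsilon>H * (norm (p j))\<^sup>2" using loop by blast
      moreover have "\<epsilon>H * (norm (p j))\<^sup>2 \<ge> 0" using eH by simp
      ultimately show "p j \<bullet> (A *v p j) > 0" by linarith
    qed
    show "\<And>j. j < J \<Longrightarrow> r (Suc j) \<noteq> 0"
    proof -
      fix j assume "j < J"
      then have "\<not> (norm (r (Suc j)) \<le> (\<zeta> / 2) * min (norm G) (\<epsilon>H * norm (y (Suc j))))" using loop by blast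
      moreover have "(\<zeta> / 2) * min (norm G) (\<epsilon>H * norm (y (Suc j))) \<ge> 0" using eH zeta by simp
      ultimately show "r (Suc j) \<noteq> 0" by auto
    qed
    show "\<And>j. j < J \<Longrightarrow> y (Suc j) = y j + ((norm (r j))\<^sup>2 / (p j \<bullet> (A *v p j))) *\<^sub>R p j" using loop by blast
    show "\<And>j. j < J \<Longrightarrow> r (Suc j) = r j + ((norm (r j))\<^sup>2 / (p j \<bullet> (A *v p j))) *\<^sub>R (A *v p j)" using loop by blast
    show "\<And>j. j < J \<Longrightarrow> p (Suc j) = - r (Suc j) + ((norm (r (Suc j)))\<^sup>2 / (norm (r j))\<^sup>2) *\<^sub>R p j" using loop by blast
  qed
  have predA: "-(G \<bullet> v) - 1/2 * (v \<bullet> (H xk *v v)) = -(G \<bullet> v + 1/2 * (v \<bullet> (A *v v))) + \<epsilon>H * (norm v)^2" for v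
    by (simp add: A_def shift_mv inner_add_right power2_norm_eq_inner algebra_simps)
  have yAy0: "y J \<bullet> (A *v y J) \<ge> 0" using yAy by simp
  have yp0: "y J \<bullet> p J \<ge> 0" using yp by simp
  have ray': "G \<bullet> (y J + \<sigma> *\<^sub>R p J) + 1/2 * ((y J + \<sigma> *\<^sub>R p J) \<bullet> (A *v (y J + \<sigma> *\<^sub>R p J)))
   = - 1/2 * (y J \<bullet> (A *v y J)) - \<sigma> * (norm (r J))\<^sup>2 + \<sigma>^2/2 * (p J \<bullet> (A *v p J))" for \<sigma>
    by (rule ray)
  define a where "a = (norm (r J))\<^sup>2 / (p J \<bullet> (A *v p J))"
  have ray_le: "G \<bullet> (y J + \<sigma> *\<^sub>R p J) + 1/2 * ((y J + \<sigma> *\<^sub>R p J) \<bullet> (A *v (y J + \<sigma> *\<^sub>R p J))) \<le> 0"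
    if pos: "p J \<bullet> (A *v p J) > 0" and sg: "0 \<le> \<sigma>" "\<sigma> \<le> a" for \<sigma>
  proof -
    have "\<sigma>^2 * (p J \<bullet> (A *v p J)) \<le> \<sigma> * a * (p J \<bullet> (A *v p J))"
      using sg pos by (simp add: power2_eq_square mult_right_mono mult_left_mono)
    also have "\<dots> = \<sigma> * (norm (r J))\<^sup>2" using pos by (simp add: a_def)
    finally have "\<sigma>^2 * (p J \<bullet> (A *v p J)) \<le> \<sigma> * (norm (r J))\<^sup>2" .
    moreover have "\<sigma> * (norm (r J))\<^sup>2 \<ge> 0" using sg by simp
    ultimately show ?thesis unfolding ray' using yAy0 by linarith
  qed
  from fin show ?thesis
  proof (elim disjE conjE)
    assume "outCG = INT_MAX"
    then show ?thesis using True by (simp add: alg4_use_cg_def)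
  next
    assume curvn: "p J \<bullet> (A *v p J) \<le> \<epsilon>H * (norm (p J))\<^sup>2" and ex: "\<exists>\<sigma>\<ge>0. sCG = y J + \<sigma> *\<^sub>R p J \<and> norm sCG = dk"
    then obtain \<sigma> where sg: "\<sigma> \<ge> 0" "sCG = y J + \<sigma> *\<^sub>R p J" "norm sCG = dk" by blast
    have n2: "(norm sCG)\<^sup>2 = (norm (y J))\<^sup>2 + 2 * \<sigma> * (y J \<bullet> p J) + \<sigma>^2 * (norm (p J))\<^sup>2"
      unfolding sg(2) by (rule norm_ray)
    have "2 * \<sigma> * (y J \<bullet> p J) \<ge> 0" using sg yp0 by simp
    then have n3: "\<sigma>^2 * (norm (p J))\<^sup>2 \<le> (norm sCG)\<^sup>2" using n2 by simp
    have c1: "\<sigma>^2 * (p J \<bullet> (A *v p J)) \<le> \<sigma>^2 * (\<epsilon>H * (norm (p J))\<^sup>2)"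
      using curvn by (simp add: mult_left_mono)
    have c2: "\<epsilon>H * (\<sigma>^2 * (norm (p J))\<^sup>2) \<le> \<epsilon>H * (norm sCG)\<^sup>2"
      using n3 eH by (simp add: mult_left_mono)
    have c3: "\<sigma> * (norm (r J))\<^sup>2 \<ge> 0" using sg by simp
    have "-(G \<bullet> sCG) - 1/2 * (sCG \<bullet> (H xk *v sCG)) = 1/2 * (y J \<bullet> (A *v y J)) + \<sigma> * (norm (r J))\<^sup>2 - \<sigma>^2/2 * (p J \<bullet> (A *v p J)) + \<epsilon>H * (norm sCG)^2"
      unfolding predA using ray'[of \<sigma>] sg(2) by simp
    moreover have "\<epsilon>H * (\<sigma>^2 * (norm (p J))\<^sup>2) = \<sigma>^2 * (\<epsilon>H * (norm (p J))\<^sup>2)" by simp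
    moreover have "0 \<le> \<epsilon>H * (norm sCG)^2" using eH by simp
    ultimately have "\<epsilon>H/4 * (norm sCG)^2 \<le> -(G \<bullet> sCG) - 1/2 * (sCG \<bullet> (H xk *v sCG))"
      using c1 c2 c3 yAy0 by linarith
    then show ?thesis using s sg dk by (simp add: G_def)
  next
    assume pos0: "p J \<bullet> (A *v p J) > \<epsilon>H * (norm (p J))\<^sup>2"
      and big: "norm (y J + ((norm (r J))\<^sup>2 / (p J \<bullet> (A *v p J))) *\<^sub>R p J) \<ge> dk"
      and ex: "\<exists>\<sigma>\<ge>0. sCG = y J + \<sigma> *\<^sub>R p J \<and> norm sCG = dk"
    then obtain \<sigma> where sg: "\<sigma> \<ge> 0" "sCG = y J + \<sigma> *\<^sub>R p J" "norm sCG = dk" by blast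
    have e0: "\<epsilon>H * (norm (p J))\<^sup>2 \<ge> 0" using eH by simp
    have pos: "p J \<bullet> (A *v p J) > 0" using pos0 e0 by linarith
    have pnz: "p J \<noteq> 0" using pos by auto
    have a0: "a \<ge> 0" using pos by (simp add: a_def)
    have sa: "\<sigma> \<le> a"
    proof (rule ccontr)
      assume "\<not> \<sigma> \<le> a"
      then have lt: "a < \<sigma>" by simp
      have n1: "(norm (y J + \<sigma> *\<^sub>R p J))\<^sup>2 = (norm (y J))\<^sup>2 + 2 * \<sigma> * (y J \<bullet> p J) + \<sigma>^2 * (norm (p J))\<^sup>2"
        by (rule norm_ray)
      have n2: "(norm (y J + a *\<^sub>R p J))\<^sup>2 = (norm (y J))\<^sup>2 + 2 * a * (y J \<bullet> p J) + a^2 * (norm (p J))\<^sup>2"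
        by (rule norm_ray)
      have "2 * a * (y J \<bullet> p J) \<le> 2 * \<sigma> * (y J \<bullet> p J)" using lt yp0 by (simp add: mult_right_mono)
      moreover have "a^2 < \<sigma>^2" using lt a0 by (simp add: power_strict_mono)
      then have "a^2 * (norm (p J))\<^sup>2 < \<sigma>^2 * (norm (p J))\<^sup>2" using pnz by simp
      ultimately have "(norm (y J + a *\<^sub>R p J))\<^sup>2 < (norm (y J + \<sigma> *\<^sub>R p J))\<^sup>2" using n1 n2 by linarith
      moreover have "dk^2 \<le> (norm (y J + a *\<^sub>R p J))\<^sup>2" using big dk unfolding a_def[symmetric]
        by (simp add: power_mono)
      ultimately show False using sg by simp
    qed
    have "G \<bullet> sCG + 1/2 * (sCG \<bullet> (A *v sCG)) \<le> 0" unfolding sg(2) by (rule ray_le[OF pos sg(1) sa])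
    then have "\<epsilon>H * (norm sCG)^2 \<le> -(G \<bullet> sCG) - 1/2 * (sCG \<bullet> (H xk *v sCG))" unfolding predA by simp
    moreover have "0 \<le> \<epsilon>H * (norm sCG)^2" using eH by simp
    ultimately have "\<epsilon>H/4 * (norm sCG)^2 \<le> -(G \<bullet> sCG) - 1/2 * (sCG \<bullet> (H xk *v sCG))" by linarith
    then show ?thesis using s sg dk by (simp add: G_def)
  next
    assume pos0: "p J \<bullet> (A *v p J) > \<epsilon>H * (norm (p J))\<^sup>2"
      and small: "norm (y J + ((norm (r J))\<^sup>2 / (p J \<bullet> (A *v p J))) *\<^sub>R p J) < dk"
      and res: "norm (r J + ((norm (r J))\<^sup>2 / (p J \<bullet> (A *v p J))) *\<^sub>R (A *v p J))
                   \<le> (\<zeta> / 2) * min (norm G) (\<epsilon>H * norm (y J + ((norm (r J))\<^sup>2 / (p J \<bullet> (A *v p J))) *\<^sub>R p J))"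
      and sv: "sCG = y J + ((norm (r J))\<^sup>2 / (p J \<bullet> (A *v p J))) *\<^sub>R p J"
    have e0: "\<epsilon>H * (norm (p J))\<^sup>2 \<ge> 0" using eH by simp
    have pos: "p J \<bullet> (A *v p J) > 0" using pos0 e0 by linarith
    have a0: "a \<ge> 0" using pos by (simp add: a_def)
    have sv': "sCG = y J + a *\<^sub>R p J" using sv by (simp add: a_def)
    have "G \<bullet> sCG + 1/2 * (sCG \<bullet> (A *v sCG)) \<le> 0" unfolding sv' by (rule ray_le[OF pos a0 order_refl])
    then have "\<epsilon>H * (norm sCG)^2 \<le> -(G \<bullet> sCG) - 1/2 * (sCG \<bullet> (H xk *v sCG))" unfolding predA by simp
    moreover have "0 \<le> \<epsilon>H * (norm sCG)^2" using eH by simp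
    ultimately have dec: "\<epsilon>H/4 * (norm sCG)^2 \<le> -(G \<bullet> sCG) - 1/2 * (sCG \<bullet> (H xk *v sCG))" by linarith
    have nz: "sCG \<noteq> 0"
    proof
      assume z: "sCG = 0"
      have "r J + a *\<^sub>R (A *v p J) = G + A *v sCG"
        using r_res[of J] by (simp add: sv' matrix_vector_right_distrib matrix_vector_mult_scaleR)
      then have "r J + a *\<^sub>R (A *v p J) = G" using z by simp
      then have "norm G \<le> (\<zeta> / 2) * min (norm G) (\<epsilon>H * norm sCG)"
        using res unfolding sv[symmetric] by (simp add: a_def)
      then have "norm G \<le> 0" using z by simp
      then show False using gnz by simp
    qed
    show ?thesis using s dec nz small sv by (simp add: G_def)
  qed
qed

lemma ratio_bound:
  fixes n P fx fxs LH e \<eta> :: real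
  assumes e: "e > 0" and eta: "\<eta> < 1" and L: "LH > 0" and n: "n > 0"
    and dec: "e/4 * n^2 \<le> P" and tay: "fxs \<le> fx - P + LH/6 * n^3" and rho: "(fx - fxs)/P < \<eta>"
  shows "n > 3*(1-\<eta>)*e/(2*LH)"
proof -
  have Pp: "P > 0" using e n dec by (smt (verit) divide_pos_pos zero_less_power mult_pos_pos)
  have "fx - fxs < \<eta> * P" using rho Pp by (simp add: pos_divide_less_eq)
  then have a: "(1-\<eta>) * P < LH/6 * n^3" using tay by (simp add: algebra_simps)
  have "(1-\<eta>) * (e/4 * n^2) \<le> (1-\<eta>) * P" using eta dec by (simp add: mult_left_mono)
  then have b: "(1-\<eta>) * (e/4 * n^2) < LH/6 * n^3" using a by linarith
  have "((1-\<eta>) * e/4) * n^2 = (1-\<eta>) * (e/4 * n^2)" by simp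
  moreover have "(LH/6 * n) * n^2 = LH/6 * n^3" by (simp add: power2_eq_square power3_eq_cube)
  ultimately have "((1-\<eta>) * e/4) * n^2 < (LH/6 * n) * n^2" using b by metis
  then have "(1-\<eta>) * e/4 < LH/6 * n" using n by (simp add: mult_less_cancel_right_pos)
  then have "3*(1-\<eta>)*e < 2*LH * n" by (simp add: algebra_simps)
  then show ?thesis using L by (simp add: pos_divide_less_eq mult.commute)
qed

theorem lemma4p2:
  fixes f :: "real^'n \<Rightarrow> real"
    and g :: "real^'n \<Rightarrow> real^'n"
    and H :: "real^'n \<Rightarrow> real^'n^'n"
    and \<epsilon>g \<epsilon>H \<gamma>1 \<gamma>2 \<psi> \<delta>0 \<delta>max \<eta> \<zeta> \<xi> M Lg LH flow :: real
    and capCG :: bool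
    and x0 :: "real^'n"
    and x :: "nat \<Rightarrow> real^'n" and d :: "nat \<Rightarrow> real" and s :: "nat \<Rightarrow> real^'n"
    and K :: "nat set" and S :: "(real^'n) set"
  assumes params: "\<epsilon>g > 0" "\<epsilon>H > 0" "0 < \<gamma>1" "\<gamma>1 < 1" "\<gamma>2 \<ge> 1" "1 / \<gamma>2 < \<psi>" "\<psi> \<le> 1"
      "\<delta>0 > 0" "\<delta>max \<ge> \<delta>0" "0 < \<eta>" "\<eta> < 1" "0 < \<zeta>" "\<zeta> < 1" "0 \<le> \<xi>" "\<xi> < 1" "M \<ge> Lg"
    and run: "alg4_run f g H \<epsilon>g \<epsilon>H \<gamma>1 \<gamma>2 \<psi> x0 \<delta>0 \<delta>max \<eta> \<zeta> capCG M x d s K"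
    and bounded_below: "\<forall>k\<in>K. f (x k) \<ge> flow"
    and S_open: "open S"
    and segs: "\<forall>k\<in>K. closed_segment (x k) (x k + s k) \<subseteq> S"
    and grad: "\<forall>y\<in>S. (f has_derivative (\<lambda>h. g y \<bullet> h)) (at y)"
    and hess: "\<forall>y\<in>S. (g has_derivative (\<lambda>h. H y *v h)) (at y)"
    and hess_cont: "continuous_on S H"
    and Lg_pos: "Lg > 0" and LH_pos: "LH > 0"
    and g_lip: "\<forall>y\<in>S. \<forall>z\<in>S. norm (g y - g z) \<le> Lg * norm (y - z)"
    and H_lip: "\<forall>y\<in>S. \<forall>z\<in>S. onorm (\<lambda>v. (H y - H z) *v v) \<le> LH * norm (y - z)"
  shows "(\<forall>k\<in>K. tr_rho f g H (x k) (s k) < \<eta> \<longrightarrow> d k > 3 * (1 - \<eta>) * \<epsilon>H / (2 * LH))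
       \<and> (\<forall>k\<in>K. d k \<ge> min \<delta>0 (3 * \<gamma>1 * (1 - \<eta>) / (2 * LH) * \<epsilon>H))
       \<and> min \<delta>0 (3 * \<gamma>1 * (1 - \<eta>) / (2 * LH) * \<epsilon>H) > 0"
proof -
  have x0: "x 0 = x0" and d0: "d 0 = \<delta>0" and closedK: "\<forall>k\<in>K. \<forall>j<k. j \<in> K"
    and steps: "\<forall>k\<in>K. alg4_step f g H \<epsilon>g \<epsilon>H \<gamma>1 \<gamma>2 \<psi> \<delta>max \<eta> \<zeta> capCG M
                (x k) (d k) (s k) (x (Suc k)) (d (Suc k))"
    using run unfolding alg4_run_def by blast+
  define B where "B = 3 * (1 - \<eta>) * \<epsilon>H / (2 * LH)"
  have segt: "x k + t *\<^sub>R s k \<in> S" if k: "k \<in> K" and t: "t \<in> {0..1}" for k t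
  proof -
    have "x k + t *\<^sub>R s k = (1 - t) *\<^sub>R x k + t *\<^sub>R (x k + s k)" by (simp add: algebra_simps)
    then have "x k + t *\<^sub>R s k \<in> closed_segment (x k) (x k + s k)"
      using t unfolding in_segment by auto
    then show ?thesis using segs k by blast
  qed
  have xS: "x k \<in> S" if "k \<in> K" for k using segt[OF that, of 0] by simp
  have symk: "\<And>u v. u \<bullet> (H (x k) *v v) = v \<bullet> (H (x k) *v u)" if k: "k \<in> K" for k
  proof -
    fix u v
    have "(H (x k) *v u) \<bullet> v = (H (x k) *v v) \<bullet> u"
      by (rule hess_sym[OF S_open xS[OF k] grad hess H_lip LH_pos])
    then show "u \<bullet> (H (x k) *v v) = v \<bullet> (H (x k) *v u)" by (simp add: inner_commute)
  qed
  have iter: "0 < norm (s k) \<and> norm (s k) \<le> d k \<and> (tr_rho f g H (x k) (s k) < \<eta> \<longrightarrow> norm (s k) > B)"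
    if k: "k \<in> K" and dk: "0 < d k" for k
  proof -
    have st: "alg4_step f g H \<epsilon>g \<epsilon>H \<gamma>1 \<gamma>2 \<psi> \<delta>max \<eta> \<zeta> capCG M (x k) (d k) (s k) (x (Suc k)) (d (Suc k))"
      using steps k by blast
    then obtain sCG outCG where cgc: "alg4_cg_call g H \<epsilon>H \<zeta> capCG M (x k) (d k) sCG outCG"
      and sel: "if alg4_use_cg \<epsilon>g (g (x k)) outCG then s k = sCG else meo_returns (g (x k)) (H (x k)) \<epsilon>H (d k) (s k)"
      unfolding alg4_step_def by blast
    have sd: "0 < norm (s k) \<and> norm (s k) \<le> d k \<and>
        \<epsilon>H/4 * (norm (s k))^2 \<le> -(g (x k) \<bullet> s k) - 1/2 * (s k \<bullet> (H (x k) *v s k))"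
      by (rule step_decrease[OF params(2) params(1) params(12) dk symk[OF k] cgc sel])
    have tay: "f (x k + s k) \<le> f (x k) + g (x k) \<bullet> s k + 1/2 * (s k \<bullet> (H (x k) *v s k)) + LH/6 * norm (s k) ^ 3"
      by (rule taylor3[OF segt[OF k] grad hess H_lip])
    have rho: "tr_rho f g H (x k) (s k) = (f (x k) - f (x k + s k)) / (-(g (x k) \<bullet> s k) - 1/2 * (s k \<bullet> (H (x k) *v s k)))"
      by (simp add: tr_rho_def qmodel_def)
    show ?thesis
    proof (intro conjI impI)
      show "0 < norm (s k)" "norm (s k) \<le> d k" using sd by auto
      assume r: "tr_rho f g H (x k) (s k) < \<eta>"
      show "norm (s k) > B" unfolding B_def
        by (rule ratio_bound[OF params(2) params(11) LH_pos, of "norm (s k)" "-(g (x k) \<bullet> s k) - 1/2 * (s k \<bullet> (H (x k) *v s k))"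
              "f (x k + s k)" "f (x k)"]) (use sd tay r rho in auto)
    qed
  qed
  have dpos: "k \<in> K \<longrightarrow> 0 < d k \<and> d k \<le> \<delta>max" for k
  proof (induction k)
    case 0 then show ?case using d0 params by simp
  next
    case (Suc j)
    show ?case
    proof
      assume kK: "Suc j \<in> K"
      then have jK: "j \<in> K" using closedK by blast
      then have dj: "0 < d j" "d j \<le> \<delta>max" using Suc.IH by auto
      have it: "0 < norm (s j)" "norm (s j) \<le> d j" using iter[OF jK dj(1)] by auto
      have st: "alg4_step f g H \<epsilon>g \<epsilon>H \<gamma>1 \<gamma>2 \<psi> \<delta>max \<eta> \<zeta> capCG M (x j) (d j) (s j) (x (Suc j)) (d (Suc j))"
        using steps jK by blast
      then have upd: "if tr_rho f g H (x j) (s j) \<ge> \<eta>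
          then x (Suc j) = x j + s j \<and> d (Suc j) = (if norm (s j) \<ge> \<psi> * d j then min (\<gamma>2 * d j) \<delta>max else d j)
          else x (Suc j) = x j \<and> d (Suc j) = \<gamma>1 * norm (s j)"
        unfolding alg4_step_def by blast
      show "0 < d (Suc j) \<and> d (Suc j) \<le> \<delta>max"
      proof (cases "tr_rho f g H (x j) (s j) \<ge> \<eta>")
        case True
        then have "d (Suc j) = (if norm (s j) \<ge> \<psi> * d j then min (\<gamma>2 * d j) \<delta>max else d j)" using upd by simp
        moreover have "0 < \<gamma>2 * d j" using dj params by simp
        ultimately show ?thesis using dj params by auto
      next
        case False
        then have "d (Suc j) = \<gamma>1 * norm (s j)" using upd by simp
        moreover have "\<gamma>1 * norm (s j) \<le> 1 * d j" using it params by (intro mult_mono) auto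
        ultimately show ?thesis using dj params it by simp
      qed
    qed
  qed
  define m where "m = min \<delta>0 (3 * \<gamma>1 * (1 - \<eta>) / (2 * LH) * \<epsilon>H)"
  have mB: "m \<le> \<gamma>1 * B" unfolding m_def B_def by (simp add: field_simps)
  have part1: "\<forall>k\<in>K. tr_rho f g H (x k) (s k) < \<eta> \<longrightarrow> d k > B"
  proof (intro ballI impI)
    fix k assume k: "k \<in> K" and r: "tr_rho f g H (x k) (s k) < \<eta>"
    have "0 < d k" using dpos k by blast
    then show "d k > B" using iter[OF k] r by force
  qed
  have part2: "k \<in> K \<longrightarrow> d k \<ge> m" for k
  proof (induction k)
    case 0 then show ?case using d0 by (simp add: m_def)
  next
    case (Suc j)
    show ?case
    proof
      assume kK: "Suc j \<in> K"
      then have jK: "j \<in> K" using closedK by blast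
      then have dj: "0 < d j" "d j \<le> \<delta>max" "m \<le> d j" using Suc.IH dpos by auto
      have it: "0 < norm (s j)" "norm (s j) \<le> d j"
        "tr_rho f g H (x j) (s j) < \<eta> \<longrightarrow> norm (s j) > B" using iter[OF jK dj(1)] by auto
      have st: "alg4_step f g H \<epsilon>g \<epsilon>H \<gamma>1 \<gamma>2 \<psi> \<delta>max \<eta> \<zeta> capCG M (x j) (d j) (s j) (x (Suc j)) (d (Suc j))"
        using steps jK by blast
      then have upd: "if tr_rho f g H (x j) (s j) \<ge> \<eta>
          then x (Suc j) = x j + s j \<and> d (Suc j) = (if norm (s j) \<ge> \<psi> * d j then min (\<gamma>2 * d j) \<delta>max else d j)
          else x (Suc j) = x j \<and> d (Suc j) = \<gamma>1 * norm (s j)"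
        unfolding alg4_step_def by blast
      show "m \<le> d (Suc j)"
      proof (cases "tr_rho f g H (x j) (s j) \<ge> \<eta>")
        case True
        then have "d (Suc j) = (if norm (s j) \<ge> \<psi> * d j then min (\<gamma>2 * d j) \<delta>max else d j)" using upd by simp
        moreover have "1 * d j \<le> \<gamma>2 * d j" using dj params by (intro mult_right_mono) auto
        then have "m \<le> \<gamma>2 * d j" "m \<le> \<delta>max" using dj by linarith+
        ultimately show ?thesis using dj by auto
      next
        case False
        then have "d (Suc j) = \<gamma>1 * norm (s j)" using upd by simp
        moreover have "norm (s j) > B" using it False by simp
        then have "\<gamma>1 * B \<le> \<gamma>1 * norm (s j)" using params by simp
        ultimately show ?thesis using mB by simp
      qed
    qed
  qed
  have part3: "m > 0" unfolding m_def using params LH_pos by simp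
  show ?thesis using part1 part2 part3 unfolding B_def m_def by blast
qed

end
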